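(* Let $\sigma$ be an $(\alpha,\beta)$-ReLU activation and let $\lambda=\max\{|\mu|:\mu\text{ an eigenvalue of }\hat A,\ \mu\neq1\}$ (with $\lambda=0$ if $1$ is the only eigenvalue). If $\lambda^2\sigma_w^2(\alpha^2+\beta^2)<2$, then $\mathbb E_{h\sim N(\mathbf 0_n,\Sigma^{(l)})}[\mathrm{Dir}(h)]=O\!\left(\left(\tfrac{\lambda^2\sigma_w^2(\alpha^2+\beta^2)}{2}\right)^l\right)$ as $l\to\infty$.
   Context: An activation $\sigma:\mathbb R\to\mathbb R$ is $(\alpha,\beta)$-ReLU if $\sigma(x)=\alpha x$ for $x\ge0$ and $\sigma(x)=\beta x$ for $x<0$, where $\alpha,\beta\ge0$ are not both $0$. Let $\mathcal G=(\mathcal V,\mathcal E)$ be a finite undirected graph with $n$ nodes, adjacency matrix $A$, degree matrix $D=\mathrm{diag}(A\mathbf 1_n)$ with degrees $d_i$, $\tilde A=A+I$, $\tilde D=D+I$, $\hat A=\tilde D^{-1/2}\tilde A\tilde D^{-1/2}$, $\hat L=I-\hat A$. For $x\in\mathbb R^n$, $\mathrm{Dir}(x)=x^\top\hat Lx=\sum_{\{i,j\}\in\mathcal E}(x_i/\sqrt{1+d_i}-x_j/\sqrt{1+d_j})^2$. Let $X\in\mathbb R^{n\times d_0}$ and $\sigma_w^2>0$. For positive semidefinite $\Sigma$, $G(\Sigma)=\mathbb E_{h\sim N(\mathbf 0_n,\Sigma)}[\sigma(h)\sigma(h)^\top]$; $\Sigma^{(1)}=\frac{\sigma_w^2}{d_0}\hat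 AXX^\top\hat A$, $\Sigma^{(l+1)}=\sigma_w^2\hat AG(\Sigma^{(l)})\hat A$. *)

theory Defs
  imports "HOL-Probability.Probability" "HOL-Library.Landau_Symbols"
begin

definition relu_ab :: "real \<Rightarrow> real \<Rightarrow> real \<Rightarrow> real" where
  "relu_ab \<alpha> \<beta> x = (if x \<ge> 0 then \<alpha> * x else \<beta> * x)"

definition is_adjacency :: "real^'n^'n \<Rightarrow> bool" where
  "is_adjacency A \<longleftrightarrow> (\<forall>i j. A$i$j = 0 \<or> A$i$j = 1) \<and> (\<forall>i j. A$i$j = A$j$i) \<and> (\<forall>i. A$i$i = 0)"

definition degree :: "real^'n^'n \<Rightarrow> 'n \<Rightarrow> real" where
  "degree A i = (\<Sum>j\<in>UNIV. A$i$j)"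

definition Dt_inv_sqrt :: "real^'n^'n \<Rightarrow> real^'n^'n" where
  "Dt_inv_sqrt A = (\<chi> i j. if i = j then 1 / sqrt (1 + degree A i) else 0)"

definition A_hat :: "real^'n^'n \<Rightarrow> real^'n^'n" where
  "A_hat A = Dt_inv_sqrt A ** (A + mat 1) ** Dt_inv_sqrt A"

definition dirichlet :: "real^'n^'n \<Rightarrow> real^'n \<Rightarrow> real" where
  "dirichlet A x = x \<bullet> ((mat 1 - A_hat A) *v x)"

text \<open>Real eigenvalues of a square matrix (Ahat is symmetric, so all its eigenvalues are real).\<close>
definition is_eigenvalue :: "real^'n^'n \<Rightarrow> real \<Rightarrow> bool" where
  "is_eigenvalue M \<mu> \<longleftrightarrow> (\<exists>v. v \<noteq> 0 \<and> M *v v = \<mu> *\<^sub>R v)"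

definition lambda_gap :: "real^'n^'n \<Rightarrow> real" where
  "lambda_gap A = Max (insert 0 {\<bar>\<mu>\<bar> | \<mu>. is_eigenvalue (A_hat A) \<mu> \<and> \<mu> \<noteq> 1})"

definition std_gauss_vec :: "(real^'n) measure" where
  "std_gauss_vec = distr (PiM UNIV (\<lambda>_. density lborel std_normal_density)) borel (\<lambda>f. \<chi> i. f i)"

text \<open>Centered Gaussian N(0,Sigma) for positive semidefinite Sigma: law of L z with
  L L^T = Sigma and z ~ N(0,I) (the law does not depend on the choice of L).\<close>
definition gauss_vec :: "real^'n^'n \<Rightarrow> (real^'n) measure" where
  "gauss_vec \<Sigma> = distr (std_gauss_vec :: (real^'n) measure) borel (\<lambda>z. (SOME L. L ** transpose L = \<Sigma>) *v z)"

definition G_map :: "(real \<Rightarrow> real) \<Rightarrow> real^'n^'n \<Rightarrow> real^'n^'n" where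
  "G_map \<sigma> \<Sigma> = (\<chi> i j. \<integral>h. \<sigma> (h$i) * \<sigma> (h$j) \<partial>gauss_vec \<Sigma>)"

text \<open>Sigma^(l) for l >= 1 (value at l = 0 is irrelevant and set to 0):
  Sigma^(1) = sw2/d0 Ahat X X^T Ahat,  Sigma^(l+1) = sw2 Ahat G(Sigma^(l)) Ahat.\<close>
primrec Sigma_l :: "(real \<Rightarrow> real) \<Rightarrow> real \<Rightarrow> real^'n^'n \<Rightarrow> real^'d^'n \<Rightarrow> nat \<Rightarrow> real^'n^'n" where
  "Sigma_l \<sigma> sw2 A X 0 = 0"
| "Sigma_l \<sigma> sw2 A X (Suc l) =
     (if l = 0 then (sw2 / real CARD('d)) *\<^sub>R (A_hat A ** X ** transpose X ** A_hat A)
      else sw2 *\<^sub>R (A_hat A ** G_map \<sigma> (Sigma_l \<sigma> sw2 A X l) ** A_hat A))"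

end

theory Submission
  imports Defs
begin

lemma inner_mat_sym:
  fixes M :: "real^'n^'n"
  assumes "transpose M = M"
  shows "x \<bullet> (M *v y) = y \<bullet> (M *v x)"
proof -
  have "x \<bullet> (M *v y) = (x v* M) \<bullet> y" by (simp add: dot_lmul_matrix)
  also have "x v* M = transpose M *v x" by (simp add: transpose_matrix_vector)
  finally show ?thesis using assms by (simp add: inner_commute)
qed

lemma spectral_sub:
  fixes M :: "real^'n^'n"
  assumes sym: "transpose M = M"
  shows "subspace S \<Longrightarrow> (\<forall>x\<in>S. M *v x \<in> S) \<Longrightarrow>
    \<exists>B. B \<subseteq> S \<and> pairwise orthogonal B \<and> (\<forall>b\<in>B. norm b = 1) \<and>
        (\<forall>b\<in>B. M *v b = (b \<bullet> (M *v b)) *\<^sub>R b) \<and> span B = S"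
proof (induction "dim S" arbitrary: S rule: less_induct)
  case less
  show ?case
  proof (cases "S = {0}")
    case True
    then show ?thesis by (intro exI[of _ "{}"]) auto
  next
    case False
    then obtain x0 where x0: "x0 \<in> S" "x0 \<noteq> 0" using less.prems subspace_0 by blast
    let ?K = "S \<inter> sphere 0 1"
    have cK: "compact ?K"
      by (intro closed_Int_compact closed_subspace less.prems compact_sphere)
    have "x0 /\<^sub>R norm x0 \<in> ?K" using x0 less.prems
      by (auto simp: subspace_scale)
    hence neK: "?K \<noteq> {}" by blast
    have "continuous_on ?K (\<lambda>x. x \<bullet> (M *v x))"
      by (intro continuous_intros)
    then obtain v where v: "v \<in> ?K" and vmax: "\<And>y. y \<in> ?K \<Longrightarrow> y \<bullet> (M *v y) \<le> v \<bullet> (M *v v)"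
      using continuous_attains_sup[OF cK neK] by blast
    define \<mu> where "\<mu> = v \<bullet> (M *v v)"
    have vS: "v \<in> S" and nv: "norm v = 1" using v by auto
    have vv: "v \<bullet> v = 1" using nv by (simp add: norm_eq_1)
    have ray: "y \<bullet> (M *v y) \<le> \<mu> * (y \<bullet> y)" if yS: "y \<in> S" for y
    proof (cases "y = 0")
      case True then show ?thesis by simp
    next
      case False
      let ?u = "y /\<^sub>R norm y"
      have "?u \<in> ?K" using yS False less.prems by (auto simp: subspace_scale)
      hence "?u \<bullet> (M *v ?u) \<le> \<mu>" using vmax \<mu>_def by blast
      hence "(y \<bullet> (M *v y)) / (norm y)^2 \<le> \<mu>"
        by (simp add: matrix_vector_mult_scaleR power2_eq_square divide_inverse mult_ac)
      hence "y \<bullet> (M *v y) \<le> \<mu> * (norm y)^2" using False by (simp add: divide_le_eq)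
      then show ?thesis by (simp add: power2_norm_eq_inner)
    qed
    have orth: "w \<bullet> (M *v v) = 0" if wS: "w \<in> S" and wv: "w \<bullet> v = 0" for w
    proof -
      define a where "a = w \<bullet> (M *v v)"
      define b where "b = w \<bullet> (M *v w) - \<mu> * (w \<bullet> w)"
      have key: "2 * t * a + t^2 * b \<le> 0" for t
      proof -
        have "v + t *\<^sub>R w \<in> S" using wS vS less.prems by (simp add: subspace_add subspace_scale)
        from ray[OF this] have "(v + t *\<^sub>R w) \<bullet> (M *v (v + t *\<^sub>R w)) \<le> \<mu> * ((v + t *\<^sub>R w) \<bullet> (v + t *\<^sub>R w))" .
        moreover have "v \<bullet> (M *v w) = a" using inner_mat_sym[OF sym, of v w] a_def by simp
        ultimately show ?thesis
          by (simp add: matrix_vector_right_distrib matrix_vector_mult_scaleR inner_add_left inner_add_right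
              a_def b_def \<mu>_def vv wv inner_commute[of v w] power2_eq_square algebra_simps)
      qed
      define K where "K = \<bar>b\<bar> + 1"
      have Kp: "K > 0" unfolding K_def by simp
      have k0: "2 * (a/K) * a + (a/K)^2 * b \<le> 0" using key[of "a/K"] .
      have "K^2 * (2 * (a/K) * a + (a/K)^2 * b) = a^2 * (2*K + b)" using Kp
        by (simp add: field_simps power2_eq_square)
      moreover have "K^2 * (2 * (a/K) * a + (a/K)^2 * b) \<le> 0"
        using k0 by (simp add: mult_nonneg_nonpos)
      ultimately have "a^2 * (2*K + b) \<le> 0" by simp
      moreover have "2*K + b \<ge> K" unfolding K_def by (simp add: abs_if)
      ultimately have "a^2 \<le> 0" using Kp
        by (metis (no_types, opaque_lifting) dual_order.strict_trans1 mult_le_0_iff not_le zero_le_power2)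
      thus ?thesis unfolding a_def by simp
    qed
    define u where "u = M *v v - \<mu> *\<^sub>R v"
    have uS: "u \<in> S" unfolding u_def using less.prems vS by (simp add: subspace_diff subspace_scale)
    have uv: "u \<bullet> v = 0" unfolding u_def inner_diff_left inner_scaleR_left using vv \<mu>_def by (simp add: inner_commute[of "M *v v" v])
    have "u \<bullet> u = 0"
    proof -
      have "u \<bullet> u = u \<bullet> (M *v v - \<mu> *\<^sub>R v)" by (subst (2) u_def) (rule refl)
      also have "\<dots> = u \<bullet> (M *v v) - \<mu> * (u \<bullet> v)" by (simp add: inner_diff_right)
      finally have "u \<bullet> u = u \<bullet> (M *v v) - \<mu> * (u \<bullet> v)" .
      then show ?thesis using orth[OF uS uv] uv by simp
    qed
    hence eig: "M *v v = \<mu> *\<^sub>R v" unfolding u_def by simp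
    define S' where "S' = {x\<in>S. x \<bullet> v = 0}"
    have subS': "subspace S'" unfolding S'_def using less.prems
      by (auto simp: subspace_def inner_add_left)
    have invS': "\<forall>x\<in>S'. M *v x \<in> S'"
    proof
      fix x assume "x \<in> S'"
      hence xS: "x \<in> S" and xv: "x \<bullet> v = 0" unfolding S'_def by auto
      have "(M *v x) \<bullet> v = x \<bullet> (M *v v)" using inner_mat_sym[OF sym, of v x] by (simp add: inner_commute)
      also have "\<dots> = 0" using eig xv by simp
      finally show "M *v x \<in> S'" using less.prems xS unfolding S'_def by auto
    qed
    have "v \<notin> S'" using vv unfolding S'_def by auto
    hence "S' \<subset> S" using vS unfolding S'_def by blast
    moreover have sp: "span S' = S'" "span S = S" using subS' less.prems(1) by (metis span_eq_iff)+
    ultimately have "span S' \<subset> span S" unfolding sp by blast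
    hence dlt: "dim S' < dim S" by (rule dim_psubset)
    obtain B' where B': "B' \<subseteq> S'" "pairwise orthogonal B'" "\<forall>b\<in>B'. norm b = 1"
      "\<forall>b\<in>B'. M *v b = (b \<bullet> (M *v b)) *\<^sub>R b" "span B' = S'"
      using less.hyps[OF dlt subS' invS'] by blast
    show ?thesis
    proof (intro exI[of _ "insert v B'"] conjI)
      show "insert v B' \<subseteq> S" using B'(1) vS unfolding S'_def by auto
      show "pairwise orthogonal (insert v B')"
        using B'(1,2) unfolding pairwise_insert S'_def orthogonal_def by (auto simp: inner_commute)
      show "\<forall>b\<in>insert v B'. norm b = 1" using B'(3) nv by auto
      show "\<forall>b\<in>insert v B'. M *v b = (b \<bullet> (M *v b)) *\<^sub>R b" using B'(4) eig \<mu>_def by auto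
      show "span (insert v B') = S"
      proof
        show "span (insert v B') \<subseteq> S"
          using B'(1) vS less.prems(1) unfolding S'_def by (intro span_minimal) auto
        show "S \<subseteq> span (insert v B')"
        proof
          fix x assume xS: "x \<in> S"
          have "x - (x \<bullet> v) *\<^sub>R v \<in> S'" unfolding S'_def using xS vS less.prems vv
            by (simp add: subspace_diff subspace_scale inner_diff_left)
          then show "x \<in> span (insert v B')" using B'(5) span_breakdown_eq by metis
        qed
      qed
    qed
  qed
qed

lemma spectral:
  fixes M :: "real^'n^'n"
  assumes sym: "transpose M = M"
  obtains B where "finite B" "\<forall>b\<in>B. norm b = 1" "\<forall>b\<in>B. \<forall>c\<in>B. b \<noteq> c \<longrightarrow> b \<bullet> c = 0"
    "\<forall>b\<in>B. M *v b = (b \<bullet> (M *v b)) *\<^sub>R b" "\<And>x. x = (\<Sum>b\<in>B. (x \<bullet> b) *\<^sub>R b)"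
proof -
  obtain B where B: "pairwise orthogonal B" "\<forall>b\<in>B. norm b = 1"
     "\<forall>b\<in>B. M *v b = (b \<bullet> (M *v b)) *\<^sub>R b" "span B = UNIV"
    using spectral_sub[OF sym, of UNIV] by auto
  have "0 \<notin> B" using B(2) by force
  hence fin: "finite B" using pairwise_orthogonal_independent[OF B(1)] independent_bound by blast
  have orth: "\<forall>b\<in>B. \<forall>c\<in>B. b \<noteq> c \<longrightarrow> b \<bullet> c = 0"
    using B(1) unfolding pairwise_def orthogonal_def by blast
  have exp: "x = (\<Sum>b\<in>B. (x \<bullet> b) *\<^sub>R b)" for x
  proof -
    define y where "y = x - (\<Sum>b\<in>B. (x \<bullet> b) *\<^sub>R b)"
    have "orthogonal y c" if cB: "c \<in> B" for c
    proof -
      have "(\<Sum>b\<in>B. (x \<bullet> b) *\<^sub>R b) \<bullet> c = (\<Sum>b\<in>B. (x \<bullet> b) * (b \<bullet> c))"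
        by (simp add: inner_sum_left)
      also have "\<dots> = (\<Sum>b\<in>B. if b = c then x \<bullet> c else 0)"
      proof (rule sum.cong)
        fix b assume bB: "b \<in> B"
        show "(x \<bullet> b) * (b \<bullet> c) = (if b = c then x \<bullet> c else 0)"
          using orth bB cB B(2) by (auto simp: norm_eq_1)
      qed simp
      also have "\<dots> = x \<bullet> c" using fin cB by simp
      finally show ?thesis unfolding y_def orthogonal_def by (simp add: inner_diff_left)
    qed
    hence "orthogonal y y" using orthogonal_to_span[of y B y] B(4) by (simp add: orthogonal_commute)
    thus ?thesis unfolding y_def orthogonal_def by simp
  qed
  show ?thesis using that fin B(2) orth B(3) exp by blast
qed

lemma quad_eig:
  fixes N :: "real^'n^'n"
  assumes fin: "finite B" and exp: "\<And>x. x = (\<Sum>b\<in>B. (x \<bullet> b) *\<^sub>R b)"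
    and ev: "\<forall>b\<in>B. N *v b = \<nu> b *\<^sub>R b"
  shows "x \<bullet> (N *v x) = (\<Sum>b\<in>B. \<nu> b * (x \<bullet> b)^2)"
proof -
  have "N *v x = N *v (\<Sum>b\<in>B. (x \<bullet> b) *\<^sub>R b)" using exp[of x] by simp
  also have "\<dots> = (\<Sum>b\<in>B. (x \<bullet> b) *\<^sub>R (N *v b))"
    by (simp add: matrix_vector_mult_scaleR linear_sum[OF matrix_vector_mul_linear] o_def)
  also have "\<dots> = (\<Sum>b\<in>B. ((x \<bullet> b) * \<nu> b) *\<^sub>R b)"
    using ev by (intro sum.cong) auto
  finally have "x \<bullet> (N *v x) = (\<Sum>b\<in>B. ((x \<bullet> b) * \<nu> b) * (x \<bullet> b))"
    by (simp add: inner_sum_right)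
  then show ?thesis by (simp add: power2_eq_square mult_ac)
qed

definition sc :: "real^'n^'n \<Rightarrow> 'n \<Rightarrow> real" where
  "sc A i = 1 / sqrt (1 + degree A i)"

lemma degree_nonneg: "is_adjacency A \<Longrightarrow> degree A i \<ge> 0"
  unfolding degree_def is_adjacency_def
  by (intro sum_nonneg) (metis order.refl zero_le_one)

lemma sc_pos: "is_adjacency A \<Longrightarrow> sc A i > 0"
  using degree_nonneg[of A i] unfolding sc_def by simp

lemma sc_sq: "is_adjacency A \<Longrightarrow> (1 + degree A i) * (sc A i)^2 = 1"
  using degree_nonneg[of A i] unfolding sc_def by (simp add: power_divide)

lemma diag_left: "((\<chi> i j. if i = j then d i else 0) ** (X::real^'n^'n)) $ i $ k = d i * X $ i $ k"
proof -
  have "((\<chi> i j. if i = j then d i else 0) ** X) $ i $ k = (\<Sum>m\<in>UNIV. (if i = m then d i else 0) * X $ m $ k)"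
    by (simp add: matrix_matrix_mult_def)
  also have "\<dots> = (\<Sum>m\<in>UNIV. if i = m then d i * X $ m $ k else 0)" by (rule sum.cong) auto
  finally have "((\<chi> i j. if i = j then d i else 0) ** X) $ i $ k = (\<Sum>m\<in>UNIV. if i = m then d i * X $ m $ k else 0)" .
  then show ?thesis by simp
qed

lemma diag_right: "((X::real^'n^'n) ** (\<chi> i j. if i = j then d i else 0)) $ i $ k = X $ i $ k * d k"
proof -
  have "(X ** (\<chi> i j. if i = j then d i else 0)) $ i $ k = (\<Sum>m\<in>UNIV. X $ i $ m * (if m = k then d m else 0))"
    by (simp add: matrix_matrix_mult_def)
  also have "\<dots> = (\<Sum>m\<in>UNIV. if m = k then X $ i $ k * d k else 0)" by (rule sum.cong) auto
  finally have "(X ** (\<chi> i j. if i = j then d i else 0)) $ i $ k = (\<Sum>m\<in>UNIV. if m = k then X $ i $ k * d k else 0)" .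
  then show ?thesis by simp
qed

lemma A_hat_entry:
  "A_hat A $ i $ j = sc A i * (A $ i $ j + (if i = j then 1 else 0)) * sc A j"
proof -
  have D: "Dt_inv_sqrt A = (\<chi> i j. if i = j then sc A i else 0)"
    unfolding Dt_inv_sqrt_def sc_def by simp
  show ?thesis
    unfolding A_hat_def D diag_right diag_left by (simp add: mat_def)
qed

lemma A_hat_sym: "is_adjacency A \<Longrightarrow> transpose (A_hat A) = A_hat A"
  unfolding transpose_def is_adjacency_def
  by (simp add: A_hat_entry vec_eq_iff mult_ac)

lemma quad_form_sum: "x \<bullet> (M *v x) = (\<Sum>i\<in>UNIV. \<Sum>j\<in>UNIV. x$i * M$i$j * x$j)"
  unfolding inner_vec_def matrix_vector_mult_def by (simp add: sum_distrib_left mult_ac)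

definition edge_energy :: "real^'n^'n \<Rightarrow> ('n \<Rightarrow> real) \<Rightarrow> real" where
  "edge_energy A y = (\<Sum>i\<in>UNIV. \<Sum>j\<in>UNIV. A$i$j * (y i - y j)^2) / 2"

lemma dirichlet_edge:
  fixes x :: "real^'n"
  assumes adj: "is_adjacency A"
  shows "dirichlet A x = edge_energy A (\<lambda>i. sc A i * x$i)"
proof -
  define y where "y i = sc A i * x$i" for i
  have xy: "x$i * x$i = (1 + degree A i) * (y i * y i)" for i
    using sc_sq[OF adj, of i] unfolding y_def by (simp add: power2_eq_square algebra_simps)
  have "dirichlet A x = (\<Sum>i\<in>UNIV. \<Sum>j\<in>UNIV. x$i * (mat 1 - A_hat A)$i$j * x$j)"
    unfolding dirichlet_def quad_form_sum ..
  also have "\<dots> = (\<Sum>i\<in>UNIV. x$i * x$i - (\<Sum>j\<in>UNIV. A$i$j * y i * y j) - y i * y i)"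
  proof (rule sum.cong)
    fix i :: 'n
    have "(\<Sum>j\<in>UNIV. x$i * (mat 1 - A_hat A)$i$j * x$j) =
          (\<Sum>j\<in>UNIV. (if i = j then x$i * x$j else 0) - A$i$j * y i * y j - (if i = j then y i * y j else 0))"
      by (intro sum.cong) (auto simp: A_hat_entry mat_def y_def algebra_simps)
    also have "\<dots> = x$i * x$i - (\<Sum>j\<in>UNIV. A$i$j * y i * y j) - y i * y i"
      by (simp add: sum_subtractf)
    finally show "(\<Sum>j\<in>UNIV. x$i * (mat 1 - A_hat A)$i$j * x$j) = x$i * x$i - (\<Sum>j\<in>UNIV. A$i$j * y i * y j) - y i * y i" .
  qed simp
  also have "\<dots> = (\<Sum>i\<in>UNIV. \<Sum>j\<in>UNIV. A$i$j * y i * y i - A$i$j * y i * y j)"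
    by (intro sum.cong) (auto simp: xy degree_def sum_subtractf sum_distrib_right sum_distrib_left algebra_simps)
  also have "\<dots> = edge_energy A y"
  proof -
    have sw: "(\<Sum>i\<in>UNIV. \<Sum>j\<in>UNIV. A$i$j * y j * y j) = (\<Sum>i\<in>UNIV. \<Sum>j\<in>UNIV. A$i$j * y i * y i)"
      using adj unfolding is_adjacency_def by (subst sum.swap) (simp)
    have "(\<Sum>i\<in>UNIV. \<Sum>j\<in>UNIV. A$i$j * (y i - y j)^2) =
      (\<Sum>i\<in>UNIV. \<Sum>j\<in>UNIV. A$i$j * y i * y i + A$i$j * y j * y j - 2 * (A$i$j * y i * y j))"
      by (intro sum.cong refl) (simp add: power2_eq_square algebra_simps)
    also have "\<dots> = (\<Sum>i\<in>UNIV. \<Sum>j\<in>UNIV. A$i$j * y i * y i) + (\<Sum>i\<in>UNIV. \<Sum>j\<in>UNIV. A$i$j * y j * y j)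
         - 2 * (\<Sum>i\<in>UNIV. \<Sum>j\<in>UNIV. A$i$j * y i * y j)"
      by (simp add: sum.distrib sum_subtractf sum_distrib_left)
    finally have "edge_energy A y = ((\<Sum>i\<in>UNIV. \<Sum>j\<in>UNIV. A$i$j * y i * y i) + (\<Sum>i\<in>UNIV. \<Sum>j\<in>UNIV. A$i$j * y j * y j)
         - 2 * (\<Sum>i\<in>UNIV. \<Sum>j\<in>UNIV. A$i$j * y i * y j)) / 2" unfolding edge_energy_def by simp
    then show ?thesis unfolding sw by (simp add: sum_subtractf)
  qed
  finally show ?thesis unfolding y_def .
qed

lemma edge_energy_nonneg: "is_adjacency A \<Longrightarrow> edge_energy A y \<ge> 0"
  unfolding edge_energy_def is_adjacency_def
  by (intro divide_nonneg_pos sum_nonneg mult_nonneg_nonneg) (auto, metis order.refl zero_le_one)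

lemma dirichlet_nonneg: "is_adjacency A \<Longrightarrow> dirichlet A x \<ge> 0"
  using dirichlet_edge edge_energy_nonneg by metis

abbreviation NN :: "real measure" where "NN \<equiv> density lborel std_normal_density"

abbreviation PP :: "('n \<Rightarrow> real) measure" where "PP \<equiv> PiM UNIV (\<lambda>_. NN)"

lemma prob_NN: "prob_space NN" by (rule prob_space_normal_density) simp

lemma prob_PP: "prob_space (PP :: ('n::finite \<Rightarrow> real) measure)"
  by (rule prob_space_PiM) (rule prob_NN)

lemma sets_NN[simp]: "sets NN = sets borel" by simp

lemma vecl_meas: "(\<lambda>f. \<chi> i. f i) \<in> borel_measurable (PP :: ('n::finite \<Rightarrow> real) measure)"
proof (subst borel_measurable_euclidean_space, intro ballI)
  fix b :: "real^'n" assume "b \<in> Basis"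
  then obtain i u where b: "b = axis i u" unfolding Basis_vec_def by auto
  have "(\<lambda>f. f i * u) \<in> borel_measurable (PP :: ('n::finite \<Rightarrow> real) measure)" by measurable
  then show "(\<lambda>f. (\<chi> i. f i) \<bullet> b) \<in> borel_measurable (PP :: ('n::finite \<Rightarrow> real) measure)"
    unfolding b by (simp add: inner_axis)
qed

lemma std_def': "(std_gauss_vec :: (real^'n::finite) measure) = distr PP borel (\<lambda>f. \<chi> i. f i)"
  unfolding std_gauss_vec_def ..

lemma prob_std: "prob_space (std_gauss_vec :: (real^'n::finite) measure)"
  unfolding std_def' by (intro prob_space.prob_space_distr prob_PP vecl_meas)

lemma sets_std[simp]: "sets (std_gauss_vec :: (real^'n::finite) measure) = sets borel"
  unfolding std_def' by simp

lemma integral_std: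
  fixes F :: "real^'n::finite \<Rightarrow> real"
  assumes "F \<in> borel_measurable borel"
  shows "(\<integral>z. F z \<partial>std_gauss_vec) = (\<integral>f. F (\<chi> i. f i) \<partial>PP)"
  unfolding std_def' by (rule integral_distr[OF vecl_meas assms])

lemma integrable_std:
  fixes F :: "real^'n::finite \<Rightarrow> real"
  assumes "F \<in> borel_measurable borel"
  shows "integrable std_gauss_vec F \<longleftrightarrow> integrable PP (\<lambda>f. F (\<chi> i. f i))"
  unfolding std_def' by (rule integrable_distr_eq[OF vecl_meas assms])

lemma NN_moment:
  "integrable NN (\<lambda>x. x ^ k)" "(\<integral>x. x \<partial>NN) = 0" "(\<integral>x. x^2 \<partial>NN) = 1" "integrable NN (\<lambda>x. x)"
proof -
  show "integrable NN (\<lambda>x. x ^ k)"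
    by (subst integrable_density) (auto simp: integrable_std_normal_moment)
  show "integrable NN (\<lambda>x. x)"
    using integrable_std_normal_moment[of 1] by (subst integrable_density) (auto simp: mult.commute)
  show "(\<integral>x. x \<partial>NN) = 0"
    using integral_std_normal_moment_odd[of 0] by (subst integral_density) auto
  show "(\<integral>x. x^2 \<partial>NN) = 1"
    using integral_std_normal_moment_even[of 1] by (subst integral_density) auto
qed

lemma PP_moment2:
  fixes i j :: "'n::finite"
  shows "integrable PP (\<lambda>f. f i * f j)" "(\<integral>f. f i * f j \<partial>PP) = (if i = j then 1 else 0)"
proof -
  interpret product_sigma_finite "\<lambda>_::'n. NN"
    unfolding product_sigma_finite_def using prob_NN prob_space_imp_sigma_finite by blast
  define g where "g k x = (if k = i then x else 1) * (if k = j then x else (1::real))" for k x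
  have eq: "(\<Prod>k\<in>UNIV. g k (f k)) = f i * f j" for f :: "'n \<Rightarrow> real"
    unfolding g_def prod.distrib by simp
  have int: "integrable NN (g k)" for k
  proof -
    have "g k = (\<lambda>x. x ^ ((if k = i then 1 else 0) + (if k = j then 1 else 0)))"
      unfolding g_def by (auto simp: power2_eq_square)
    then show ?thesis using NN_moment(1) by simp
  qed
  show "integrable PP (\<lambda>f. f i * f j)"
    using product_integrable_prod[of UNIV g] int unfolding eq by simp
  have "(\<integral>f. f i * f j \<partial>PP) = (\<Prod>k\<in>UNIV. integral\<^sup>L NN (g k))"
    using product_integral_prod[of UNIV g] int unfolding eq by simp
  also have "\<dots> = (if i = j then 1 else 0)"
  proof -
    interpret NNp: prob_space NN by (rule prob_NN)
    have ig: "integral\<^sup>L NN (g k) = (if k = i \<and> k = j then 1 else if k = i \<or> k = j then 0 else 1)" for k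
      unfolding g_def using NN_moment(2,3) NNp.prob_space by (auto simp: power2_eq_square)
    show ?thesis
    proof (cases "i = j")
      case True
      then show ?thesis unfolding ig by (auto intro!: prod.neutral)
    next
      case False
      then have "(\<Prod>k\<in>UNIV. integral\<^sup>L NN (g k)) = 0"
        unfolding ig by (intro prod_zero) auto
      then show ?thesis using False by simp
    qed
  qed
  finally show "(\<integral>f. f i * f j \<partial>PP) = (if i = j then 1 else 0)" .
qed

lemma NN_sym: "distr NN NN uminus = NN"
proof -
  interpret prob_space NN by (rule prob_NN)
  have d0: "distributed NN lborel (\<lambda>x. x) std_normal_density"
    unfolding distributed_def by (auto simp: distr_id2)
  have "distributed NN lborel (\<lambda>x. 0 + (-1) * x) (normal_density (0 + (-1) * 0) (\<bar>-1\<bar> * 1))"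
    by (rule normal_density_affine[OF d0]) auto
  hence "distr NN lborel uminus = NN" unfolding distributed_def by simp
  moreover have "distr NN NN uminus = distr NN lborel uminus" by (rule distr_cong) auto
  ultimately show ?thesis by simp
qed

lemma PP_sym: "distr PP PP (\<lambda>f i. - f i) = (PP :: ('n::finite \<Rightarrow> real) measure)"
proof -
  have "distr PP PP (compose UNIV uminus) = PiM UNIV (\<lambda>i::'n. distr NN NN uminus)"
    by (rule distr_PiM_finite_prob_space') (auto simp: prob_NN)
  moreover have "compose UNIV uminus = (\<lambda>(f::'n \<Rightarrow> real) i. - f i)"
    unfolding compose_def by (simp add: restrict_UNIV)
  ultimately show ?thesis unfolding NN_sym by simp
qed

lemma neg_meas: "(\<lambda>(f::'n::finite \<Rightarrow> real) i. - f i) \<in> measurable PP PP"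
  by (rule measurable_PiM_single') (auto simp: space_PiM)

lemma std_sym: "distr std_gauss_vec borel uminus = (std_gauss_vec :: (real^'n::finite) measure)"
proof -
  have m1: "uminus \<in> measurable (borel :: (real^'n) measure) borel" by simp
  have "distr std_gauss_vec borel uminus = distr PP borel (uminus \<circ> (\<lambda>f. \<chi> i. f i) :: ('n \<Rightarrow> real) \<Rightarrow> real^'n)"
    unfolding std_def' by (rule distr_distr[OF m1 vecl_meas])
  also have "uminus \<circ> (\<lambda>f. \<chi> i. f i) = (\<lambda>f. \<chi> i. f i) \<circ> (\<lambda>(f::'n \<Rightarrow> real) i. - f i)"
    by (auto simp: vec_eq_iff)
  also have "distr PP borel \<dots> = distr (distr PP PP (\<lambda>(f::'n \<Rightarrow> real) i. - f i)) borel (\<lambda>f. \<chi> i. f i)"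
    by (rule distr_distr[OF vecl_meas neg_meas, symmetric])
  also have "\<dots> = std_gauss_vec" unfolding PP_sym std_def' ..
  finally show ?thesis .
qed

lemma integral_std_sym:
  fixes F :: "real^'n::finite \<Rightarrow> real"
  assumes "F \<in> borel_measurable borel"
  shows "(\<integral>z. F (- z) \<partial>std_gauss_vec) = (\<integral>z. F z \<partial>std_gauss_vec)"
proof -
  have "(\<integral>z. F z \<partial>std_gauss_vec) = (\<integral>z. F z \<partial>distr std_gauss_vec borel uminus)"
    unfolding std_sym ..
  also have "\<dots> = (\<integral>z. F (- z) \<partial>std_gauss_vec)"
  proof (rule integral_distr)
    show "uminus \<in> measurable (std_gauss_vec::(real^'n) measure) borel"
      by (subst measurable_cong_sets[OF sets_std refl]) simp
  qed (simp add: assms)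
  finally show ?thesis by simp
qed

lemma std_moment2:
  fixes i j :: "'n::finite"
  shows "integrable std_gauss_vec (\<lambda>z::real^'n. z$i * z$j)"
        "(\<integral>z. z$i * z$j \<partial>(std_gauss_vec::(real^'n) measure)) = (if i = j then 1 else 0)"
proof -
  have m: "(\<lambda>z::real^'n. z$i * z$j) \<in> borel_measurable borel" by measurable
  show "integrable std_gauss_vec (\<lambda>z::real^'n. z$i * z$j)"
    unfolding integrable_std[OF m] using PP_moment2(1)[of i j] by simp
  show "(\<integral>z. z$i * z$j \<partial>(std_gauss_vec::(real^'n) measure)) = (if i = j then 1 else 0)"
    unfolding integral_std[OF m] using PP_moment2(2)[of i j] by simp
qed

lemma lin_meas: "(\<lambda>z. (L::real^'m::finite^'n::finite) *v z) \<in> borel_measurable borel"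
  by (intro borel_measurable_continuous_onI linear_continuous_on)
     (simp add: linear_conv_bounded_linear[symmetric] matrix_vector_mul_linear)

lemma std_lin_moment2:
  fixes L :: "real^'n::finite^'n"
  shows "integrable std_gauss_vec (\<lambda>z::real^'n. (L *v z)$i * (L *v z)$j)"
        "(\<integral>z. (L *v z)$i * (L *v z)$j \<partial>std_gauss_vec) = (L ** transpose L)$i$j"
proof -
  have eq: "(L *v z)$i * (L *v z)$j = (\<Sum>k\<in>UNIV. \<Sum>m\<in>UNIV. (L$i$k * L$j$m) * (z$k * z$m))" for z
    unfolding matrix_vector_mult_def by (simp add: sum_product mult_ac)
  show "integrable std_gauss_vec (\<lambda>z::real^'n. (L *v z)$i * (L *v z)$j)"
    unfolding eq by (simp add: std_moment2)
  have "(\<integral>z. (L *v z)$i * (L *v z)$j \<partial>std_gauss_vec) = (\<Sum>k\<in>UNIV. \<Sum>m\<in>UNIV. (L$i$k * L$j$m) * (if k = m then 1 else 0))"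
    unfolding eq by (simp add: integral_sum integrable_sum integrable_mult_right std_moment2)
  also have "\<dots> = (L ** transpose L)$i$j"
    by (simp add: matrix_matrix_mult_def transpose_def if_distrib cong: if_cong)
  finally show "(\<integral>z. (L *v z)$i * (L *v z)$j \<partial>std_gauss_vec) = (L ** transpose L)$i$j" .
qed

definition Lof :: "real^'n^'n \<Rightarrow> real^'n^'n" where
  "Lof S = (SOME L. L ** transpose L = S)"

lemma gauss_def': "gauss_vec S = distr std_gauss_vec borel (\<lambda>z. Lof S *v z)"
  unfolding gauss_vec_def Lof_def ..

lemma Lof_eq: assumes "\<exists>L::real^'n^'n. L ** transpose L = S" shows "Lof S ** transpose (Lof S) = S"
  using someI_ex[OF assms] unfolding Lof_def .

lemma prob_gauss: "prob_space (gauss_vec (S::real^'n::finite^'n))"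
  unfolding gauss_def' by (intro prob_space.prob_space_distr prob_std) (subst measurable_cong_sets[OF sets_std refl], rule lin_meas)

lemma lin_meas_std: "(\<lambda>z. (L::real^'n::finite^'n) *v z) \<in> measurable std_gauss_vec borel"
  by (subst measurable_cong_sets[OF sets_std refl]) (rule lin_meas)

lemma integral_gauss:
  fixes F :: "real^'n::finite \<Rightarrow> real"
  assumes "F \<in> borel_measurable borel"
  shows "(\<integral>h. F h \<partial>gauss_vec S) = (\<integral>z. F (Lof S *v z) \<partial>std_gauss_vec)"
  unfolding gauss_def' by (rule integral_distr[OF lin_meas_std assms])

lemma integrable_gauss:
  fixes F :: "real^'n::finite \<Rightarrow> real"
  assumes "F \<in> borel_measurable borel"
  shows "integrable (gauss_vec S) F \<longleftrightarrow> integrable std_gauss_vec (\<lambda>z. F (Lof S *v z))"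
  unfolding gauss_def' by (rule integrable_distr_eq[OF lin_meas_std assms])

lemma mv_neg: "(L::real^'m::finite^'n::finite) *v (- z) = - (L *v z)"
  by (simp add: vec_eq_iff matrix_vector_mult_def sum_negf)

lemma gauss_sym:
  fixes F :: "real^'n::finite \<Rightarrow> real"
  assumes [measurable]: "F \<in> borel_measurable borel"
  shows "(\<integral>h. F (- h) \<partial>gauss_vec S) = (\<integral>h. F h \<partial>gauss_vec S)"
proof -
  have m: "(\<lambda>z. F (Lof S *v z)) \<in> borel_measurable borel"
    using lin_meas[of "Lof S"] by measurable
  have "(\<integral>h. F (- h) \<partial>gauss_vec S) = (\<integral>z. F (- (Lof S *v z)) \<partial>std_gauss_vec)"
    by (rule integral_gauss) measurable
  also have "\<dots> = (\<integral>z. F (Lof S *v (- z)) \<partial>std_gauss_vec)"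
    by (simp add: mv_neg)
  also have "\<dots> = (\<integral>z. F (Lof S *v z) \<partial>std_gauss_vec)"
    by (rule integral_std_sym[OF m])
  also have "\<dots> = (\<integral>h. F h \<partial>gauss_vec S)"
    by (rule integral_gauss[symmetric]) fact
  finally show ?thesis .
qed

lemma gauss_moment2:
  fixes S :: "real^'n::finite^'n"
  shows "integrable (gauss_vec S) (\<lambda>h. h$i * h$j)"
    "\<exists>L::real^'n^'n. L ** transpose L = S \<Longrightarrow> (\<integral>h. h$i * h$j \<partial>gauss_vec S) = S$i$j"
proof -
  have m: "(\<lambda>h::real^'n. h$i * h$j) \<in> borel_measurable borel" by measurable
  show "integrable (gauss_vec S) (\<lambda>h. h$i * h$j)"
    unfolding integrable_gauss[OF m] by (rule std_lin_moment2)
  show "\<exists>L::real^'n^'n. L ** transpose L = S \<Longrightarrow> (\<integral>h. h$i * h$j \<partial>gauss_vec S) = S$i$j"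
    unfolding integral_gauss[OF m] std_lin_moment2 by (simp add: Lof_eq)
qed

lemma gauss_quad:
  fixes S M :: "real^'n::finite^'n"
  shows "integrable (gauss_vec S) (\<lambda>h. h \<bullet> (M *v h))"
    "\<exists>L::real^'n^'n. L ** transpose L = S \<Longrightarrow> (\<integral>h. h \<bullet> (M *v h) \<partial>gauss_vec S) = (\<Sum>i\<in>UNIV. \<Sum>j\<in>UNIV. M$i$j * S$i$j)"
proof -
  have eq: "h \<bullet> (M *v h) = (\<Sum>i\<in>UNIV. \<Sum>j\<in>UNIV. M$i$j * (h$i * h$j))" for h :: "real^'n"
    unfolding inner_vec_def matrix_vector_mult_def by (simp add: sum_distrib_left mult_ac)
  show "integrable (gauss_vec S) (\<lambda>h. h \<bullet> (M *v h))"
    unfolding eq by (simp add: gauss_moment2)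
  show "\<exists>L::real^'n^'n. L ** transpose L = S \<Longrightarrow> (\<integral>h. h \<bullet> (M *v h) \<partial>gauss_vec S) = (\<Sum>i\<in>UNIV. \<Sum>j\<in>UNIV. M$i$j * S$i$j)"
    unfolding eq by (simp add: gauss_moment2)
qed

lemma relu_pq: "relu_ab a b x = (a+b)/2 * x + (a-b)/2 * \<bar>x\<bar>"
  unfolding relu_ab_def by (auto simp: field_simps)

lemma relu_meas[measurable]: "relu_ab a b \<in> borel_measurable borel"
  unfolding relu_pq[abs_def] by measurable

lemma relu_bound: "\<bar>relu_ab a b x\<bar> \<le> (\<bar>a\<bar> + \<bar>b\<bar>) * \<bar>x\<bar>"
  unfolding relu_ab_def by (auto simp: abs_mult intro: mult_right_mono)

lemma relu_prod_int:
  fixes S :: "real^'n::finite^'n"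
  shows "integrable (gauss_vec S) (\<lambda>h. relu_ab a b (h$i) * relu_ab a b (h$j))"
proof -
  define C where "C = (\<bar>a\<bar> + \<bar>b\<bar>)^2"
  have int: "integrable (gauss_vec S) (\<lambda>h. C * (h$i * h$i + h$j * h$j))"
    by (simp add: gauss_moment2)
  have meas: "(\<lambda>h. relu_ab a b (h$i) * relu_ab a b (h$j)) \<in> borel_measurable (gauss_vec S)"
    unfolding gauss_def' by measurable
  have bd: "norm (relu_ab a b (h$i) * relu_ab a b (h$j)) \<le> norm (C * (h$i * h$i + h$j * h$j))" for h :: "real^'n"
  proof -
    have "norm (relu_ab a b (h$i) * relu_ab a b (h$j)) \<le> ((\<bar>a\<bar> + \<bar>b\<bar>) * \<bar>h$i\<bar>) * ((\<bar>a\<bar> + \<bar>b\<bar>) * \<bar>h$j\<bar>)"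
      unfolding real_norm_def abs_mult by (intro mult_mono relu_bound) auto
    also have "\<dots> = C * (\<bar>h$i\<bar> * \<bar>h$j\<bar>)" unfolding C_def by (simp add: power2_eq_square mult_ac)
    also have "\<dots> \<le> C * (h$i * h$i + h$j * h$j)"
    proof (rule mult_left_mono)
      have "0 \<le> (\<bar>h$i\<bar> - \<bar>h$j\<bar>)^2" by simp
      then show "\<bar>h$i\<bar> * \<bar>h$j\<bar> \<le> h$i * h$i + h$j * h$j"
        by (simp add: power2_eq_square algebra_simps) (smt (verit) abs_mult_self_eq zero_le_mult_iff abs_ge_zero)
    qed (simp add: C_def)
    also have "\<dots> \<le> norm (C * (h$i * h$i + h$j * h$j))" by simp
    finally show ?thesis .
  qed
  have "AE h in gauss_vec S. norm (relu_ab a b (h$i) * relu_ab a b (h$j)) \<le> norm (C * (h$i * h$i + h$j * h$j))"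
    by (intro AE_I2 bd)
  from Bochner_Integration.integrable_bound[OF int meas this] show ?thesis .
qed

lemma G_quad:
  fixes S W :: "real^'n::finite^'n" and a b :: real
  defines "s \<equiv> \<lambda>h::real^'n. \<chi> i. relu_ab a b (h$i)"
  shows "integrable (gauss_vec S) (\<lambda>h. s h \<bullet> (W *v s h))"
    "(\<integral>h. s h \<bullet> (W *v s h) \<partial>gauss_vec S) = (\<Sum>i\<in>UNIV. \<Sum>j\<in>UNIV. W$i$j * G_map (relu_ab a b) S $i$j)"
proof -
  have eq: "s h \<bullet> (W *v s h) = (\<Sum>i\<in>UNIV. \<Sum>j\<in>UNIV. W$i$j * (relu_ab a b (h$i) * relu_ab a b (h$j)))" for h
    unfolding inner_vec_def matrix_vector_mult_def s_def by (simp add: sum_distrib_left mult_ac)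
  show "integrable (gauss_vec S) (\<lambda>h. s h \<bullet> (W *v s h))"
    unfolding eq by (simp add: relu_prod_int)
  show "(\<integral>h. s h \<bullet> (W *v s h) \<partial>gauss_vec S) = (\<Sum>i\<in>UNIV. \<Sum>j\<in>UNIV. W$i$j * G_map (relu_ab a b) S $i$j)"
    unfolding eq by (simp add: relu_prod_int G_map_def)
qed

lemma onb_inner:
  fixes B :: "(real^'n) set"
  assumes fin: "finite B" and n1: "\<forall>b\<in>B. norm b = 1" and orth: "\<forall>b\<in>B. \<forall>c\<in>B. b \<noteq> c \<longrightarrow> b \<bullet> c = 0"
    and bB: "b \<in> B"
  shows "b \<bullet> (\<Sum>c\<in>B. a c *\<^sub>R c) = a b"
proof -
  have "b \<bullet> (\<Sum>c\<in>B. a c *\<^sub>R c) = (\<Sum>c\<in>B. a c * (b \<bullet> c))" by (simp add: inner_sum_right)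
  also have "\<dots> = (\<Sum>c\<in>B. if c = b then a b else 0)"
    using n1 orth bB by (intro sum.cong) (auto simp: norm_eq_1)
  also have "\<dots> = a b" using fin bB by simp
  finally show ?thesis .
qed

lemma psd_sqrt:
  fixes G :: "real^'n^'n"
  assumes sym: "transpose G = G" and psd: "\<And>v. v \<bullet> (G *v v) \<ge> 0"
  shows "\<exists>K::real^'n^'n. K ** transpose K = G"
proof -
  obtain B where fin: "finite B" and n1: "\<forall>b\<in>B. norm b = 1" and orth: "\<forall>b\<in>B. \<forall>c\<in>B. b \<noteq> c \<longrightarrow> b \<bullet> c = 0"
    and ev: "\<forall>b\<in>B. G *v b = (b \<bullet> (G *v b)) *\<^sub>R b" and exp: "\<And>x. x = (\<Sum>b\<in>B. (x \<bullet> b) *\<^sub>R b)"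
    using spectral[OF sym] by blast
  define \<nu> where "\<nu> b = b \<bullet> (G *v b)" for b
  define K :: "real^'n^'n" where "K = (\<chi> i j. \<Sum>b\<in>B. sqrt (\<nu> b) * b$i * b$j)"
  have Ksym: "transpose K = K" unfolding K_def transpose_def by (simp add: mult_ac)
  have Kx: "K *v x = (\<Sum>b\<in>B. (sqrt (\<nu> b) * (b \<bullet> x)) *\<^sub>R b)" for x
    unfolding K_def matrix_vector_mult_def inner_vec_def
    by (simp add: vec_eq_iff sum_component sum_distrib_left sum_distrib_right mult_ac sum.swap[of _ B])
  have Gx: "G *v x = (\<Sum>b\<in>B. (\<nu> b * (b \<bullet> x)) *\<^sub>R b)" for x
  proof -
    have "G *v x = G *v (\<Sum>b\<in>B. (x \<bullet> b) *\<^sub>R b)" using exp[of x] by simp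
    also have "\<dots> = (\<Sum>b\<in>B. (x \<bullet> b) *\<^sub>R (G *v b))"
      by (simp add: matrix_vector_mult_scaleR linear_sum[OF matrix_vector_mul_linear] o_def)
    also have "\<dots> = (\<Sum>b\<in>B. (\<nu> b * (b \<bullet> x)) *\<^sub>R b)"
    proof (intro sum.cong refl)
      fix b assume "b \<in> B"
      then have "G *v b = \<nu> b *\<^sub>R b" using ev unfolding \<nu>_def by blast
      then show "(x \<bullet> b) *\<^sub>R (G *v b) = (\<nu> b * (b \<bullet> x)) *\<^sub>R b" by (simp add: inner_commute)
    qed
    finally show ?thesis .
  qed
  have "(K ** transpose K) *v x = G *v x" for x
  proof -
    have "(K ** transpose K) *v x = K *v (K *v x)" unfolding Ksym by (simp add: matrix_vector_mul_assoc)
    also have "\<dots> = (\<Sum>b\<in>B. (sqrt (\<nu> b) * (b \<bullet> (K *v x))) *\<^sub>R b)" by (rule Kx)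
    also have "\<dots> = (\<Sum>b\<in>B. (\<nu> b * (b \<bullet> x)) *\<^sub>R b)"
    proof (intro sum.cong refl)
      fix b assume bB: "b \<in> B"
      have "b \<bullet> (K *v x) = sqrt (\<nu> b) * (b \<bullet> x)"
        unfolding Kx by (rule onb_inner[OF fin n1 orth bB])
      moreover have "\<nu> b \<ge> 0" unfolding \<nu>_def by (rule psd)
      ultimately show "(sqrt (\<nu> b) * (b \<bullet> (K *v x))) *\<^sub>R b = (\<nu> b * (b \<bullet> x)) *\<^sub>R b"
        by (simp add: mult.assoc[symmetric])
    qed
    also have "\<dots> = G *v x" by (rule Gx[symmetric])
    finally show ?thesis .
  qed
  then show ?thesis using matrix_eq by blast
qed

lemma Ahat_spectral_ineq:
  fixes A :: "real^'n^'n"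
  assumes adj: "is_adjacency A"
  shows "x \<bullet> ((A_hat A ** (mat 1 - A_hat A) ** A_hat A) *v x) \<le> (lambda_gap A)^2 * dirichlet A x"
proof -
  let ?M = "A_hat A"
  let ?L = "mat 1 - A_hat A"
  obtain B where fin: "finite B" and n1: "\<forall>b\<in>B. norm b = 1" and orth: "\<forall>b\<in>B. \<forall>c\<in>B. b \<noteq> c \<longrightarrow> b \<bullet> c = 0"
    and ev: "\<forall>b\<in>B. ?M *v b = (b \<bullet> (?M *v b)) *\<^sub>R b" and exp: "\<And>x. x = (\<Sum>b\<in>B. (x \<bullet> b) *\<^sub>R b)"
    using spectral[OF A_hat_sym[OF adj]] by blast
  define \<mu> where "\<mu> b = b \<bullet> (?M *v b)" for b
  have evb: "?M *v b = \<mu> b *\<^sub>R b" if "b \<in> B" for b using ev that unfolding \<mu>_def by blast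
  have Lb: "?L *v b = (1 - \<mu> b) *\<^sub>R b" if "b \<in> B" for b
    using evb[OF that] by (simp add: matrix_vector_mult_diff_rdistrib algebra_simps)
  have Wb: "(?M ** ?L ** ?M) *v b = (\<mu> b ^ 2 * (1 - \<mu> b)) *\<^sub>R b" if "b \<in> B" for b
  proof -
    have "(?M ** ?L ** ?M) *v b = ?M *v (?L *v (?M *v b))" by (simp add: matrix_vector_mul_assoc[symmetric])
    also have "\<dots> = (\<mu> b ^ 2 * (1 - \<mu> b)) *\<^sub>R b"
      using evb[OF that] Lb[OF that] by (simp add: matrix_vector_mult_scaleR power2_eq_square mult_ac)
    finally show ?thesis .
  qed
  have mu_le1: "\<mu> b \<le> 1" if bB: "b \<in> B" for b
  proof -
    have d: "dirichlet A b = (1 - \<mu> b) * (b \<bullet> b)" unfolding dirichlet_def Lb[OF bB] by simp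
    have bb: "b \<bullet> b = 1" using n1 bB by (simp add: norm_eq_1)
    have "0 \<le> dirichlet A b" by (rule dirichlet_nonneg[OF adj])
    then show ?thesis unfolding d bb by simp
  qed
  define E where "E = {\<bar>\<mu>'\<bar> | \<mu>'. is_eigenvalue ?M \<mu>' \<and> \<mu>' \<noteq> 1}"
  have eig_in: "\<exists>b\<in>B. m = \<mu> b" if "is_eigenvalue ?M m" for m
  proof -
    from that obtain v where v0: "v \<noteq> 0" and vm: "?M *v v = m *\<^sub>R v" unfolding is_eigenvalue_def by auto
    have "\<exists>b\<in>B. v \<bullet> b \<noteq> 0"
    proof (rule ccontr)
      assume "\<not> ?thesis"
      then have "(\<Sum>b\<in>B. (v \<bullet> b) *\<^sub>R b) = 0" by simp
      then show False using exp[of v] v0 by metis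
    qed
    then obtain b where bB: "b \<in> B" and vb: "v \<bullet> b \<noteq> 0" by blast
    have "m * (v \<bullet> b) = (?M *v v) \<bullet> b" using vm by simp
    also have "\<dots> = v \<bullet> (?M *v b)" using inner_mat_sym[OF A_hat_sym[OF adj], of b v] by (simp add: inner_commute)
    also have "\<dots> = \<mu> b * (v \<bullet> b)" using evb[OF bB] by simp
    finally have "m = \<mu> b" using vb by simp
    then show ?thesis using bB by blast
  qed
  have finE: "finite E"
  proof (rule finite_subset)
    show "E \<subseteq> (\<lambda>b. \<bar>\<mu> b\<bar>) ` B" unfolding E_def using eig_in by blast
  qed (use fin in simp)
  have lam: "lambda_gap A = Max (insert 0 E)" unfolding lambda_gap_def E_def ..
  have mu_le_lam: "\<mu> b ^ 2 \<le> (lambda_gap A)^2" if bB: "b \<in> B" and ne: "\<mu> b \<noteq> 1" for b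
  proof -
    have "b \<noteq> 0" using n1 bB by auto
    then have "is_eigenvalue ?M (\<mu> b)" unfolding is_eigenvalue_def using evb[OF bB] by blast
    then have "\<bar>\<mu> b\<bar> \<in> insert 0 E" unfolding E_def using ne by blast
    then have "\<bar>\<mu> b\<bar> \<le> lambda_gap A" unfolding lam using finE by simp
    then show ?thesis by (metis abs_ge_zero power2_abs power_mono)
  qed
  have "x \<bullet> ((?M ** ?L ** ?M) *v x) = (\<Sum>b\<in>B. (\<mu> b ^ 2 * (1 - \<mu> b)) * (x \<bullet> b)^2)"
    by (rule quad_eig[OF fin exp]) (use Wb in blast)
  also have "\<dots> \<le> (\<Sum>b\<in>B. (lambda_gap A)^2 * ((1 - \<mu> b) * (x \<bullet> b)^2))"
  proof (rule sum_mono)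
    fix b assume bB: "b \<in> B"
    show "\<mu> b ^ 2 * (1 - \<mu> b) * (x \<bullet> b)^2 \<le> (lambda_gap A)^2 * ((1 - \<mu> b) * (x \<bullet> b)^2)"
    proof (cases "\<mu> b = 1")
      case True then show ?thesis by simp
    next
      case False
      have "\<mu> b ^ 2 * ((1 - \<mu> b) * (x \<bullet> b)^2) \<le> (lambda_gap A)^2 * ((1 - \<mu> b) * (x \<bullet> b)^2)"
        by (rule mult_right_mono[OF mu_le_lam[OF bB False]]) (use mu_le1[OF bB] in simp)
      then show ?thesis by (simp add: mult_ac)
    qed
  qed
  also have "\<dots> = (lambda_gap A)^2 * (\<Sum>b\<in>B. (1 - \<mu> b) * (x \<bullet> b)^2)" by (simp add: sum_distrib_left)
  also have "(\<Sum>b\<in>B. (1 - \<mu> b) * (x \<bullet> b)^2) = dirichlet A x"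
    unfolding dirichlet_def by (rule quad_eig[OF fin exp, symmetric]) (use Lb in blast)
  finally show ?thesis .
qed

lemma relu_pair:
  "(relu_ab a b x - relu_ab a b y)^2 + (relu_ab a b (-x) - relu_ab a b (-y))^2 \<le> (a^2 + b^2) * (x - y)^2"
proof -
  define p where "p = (a+b)/2"
  define q where "q = (a-b)/2"
  have r: "relu_ab a b z = p * z + q * \<bar>z\<bar>" for z unfolding relu_pq p_def q_def ..
  have "(relu_ab a b x - relu_ab a b y)^2 + (relu_ab a b (-x) - relu_ab a b (-y))^2
      = 2 * p^2 * (x - y)^2 + 2 * q^2 * (\<bar>x\<bar> - \<bar>y\<bar>)^2"
    unfolding r by (simp add: power2_eq_square algebra_simps)
  also have "\<dots> \<le> 2 * p^2 * (x - y)^2 + 2 * q^2 * (x - y)^2"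
  proof -
    have "(\<bar>x\<bar> - \<bar>y\<bar>)^2 \<le> (x - y)^2"
      by (metis abs_triangle_ineq3 power2_abs abs_ge_zero power_mono)
    then show ?thesis by (intro add_left_mono mult_left_mono) auto
  qed
  also have "\<dots> = (a^2 + b^2) * (x - y)^2" unfolding p_def q_def by (simp add: power2_eq_square field_simps)
  finally show ?thesis .
qed

lemma relu_hom: "c \<ge> 0 \<Longrightarrow> c * relu_ab a b x = relu_ab a b (c * x)"
  unfolding relu_ab_def by (auto simp: zero_le_mult_iff mult_le_0_iff)

lemma relu_neg: "relu_ab a b (- x) = relu_ab (-b) (-a) x"
  unfolding relu_ab_def by auto

lemma dir_relu_pair:
  fixes A :: "real^'n^'n" and h :: "real^'n"
  assumes adj: "is_adjacency A"
  shows "dirichlet A (\<chi> i. relu_ab a b (h$i)) + dirichlet A (\<chi> i. relu_ab a b (- h$i)) \<le> (a^2 + b^2) * dirichlet A h"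
proof -
  define y where "y i = sc A i * h$i" for i
  have e1: "dirichlet A (\<chi> i. relu_ab a b (h$i)) = edge_energy A (\<lambda>i. relu_ab a b (y i))"
    unfolding dirichlet_edge[OF adj] y_def using sc_pos[OF adj] by (simp add: relu_hom less_imp_le)
  have e2: "dirichlet A (\<chi> i. relu_ab a b (- h$i)) = edge_energy A (\<lambda>i. relu_ab a b (- y i))"
    unfolding dirichlet_edge[OF adj] y_def using sc_pos[OF adj] by (simp add: relu_hom less_imp_le)
  have e3: "dirichlet A h = edge_energy A y" unfolding dirichlet_edge[OF adj] y_def ..
  have Anneg: "A$i$j \<ge> 0" for i j using adj unfolding is_adjacency_def by (metis order.refl zero_le_one)
  have "edge_energy A (\<lambda>i. relu_ab a b (y i)) + edge_energy A (\<lambda>i. relu_ab a b (- y i))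
     = (\<Sum>i\<in>UNIV. \<Sum>j\<in>UNIV. A$i$j * ((relu_ab a b (y i) - relu_ab a b (y j))^2 + (relu_ab a b (- y i) - relu_ab a b (- y j))^2)) / 2"
    unfolding edge_energy_def by (simp add: add_divide_distrib[symmetric] sum.distrib[symmetric] distrib_left)
  also have "\<dots> \<le> (\<Sum>i\<in>UNIV. \<Sum>j\<in>UNIV. A$i$j * ((a^2 + b^2) * (y i - y j)^2)) / 2"
    by (intro divide_right_mono sum_mono mult_left_mono relu_pair Anneg) simp
  also have "\<dots> = (a^2 + b^2) * edge_energy A y"
    unfolding edge_energy_def by (simp add: sum_distrib_left mult_ac)
  finally show ?thesis unfolding e1 e2 e3 .
qed

lemma sets_gauss[simp]: "sets (gauss_vec (S::real^'n::finite^'n)) = sets borel"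
  unfolding gauss_def' by simp

lemma meas_of_int:
  fixes F :: "real^'n::finite \<Rightarrow> real"
  assumes "integrable (gauss_vec S) F"
  shows "F \<in> borel_measurable borel"
proof -
  have "F \<in> borel_measurable (gauss_vec S)" using assms by (rule borel_measurable_integrable)
  then show ?thesis by (subst (asm) measurable_cong_sets[OF sets_gauss refl])
qed

lemma dir_s_int:
  fixes S :: "real^'n::finite^'n" and A :: "real^'n^'n"
  shows "integrable (gauss_vec S) (\<lambda>h. dirichlet A (\<chi> i. relu_ab a b (h$i)))"
  unfolding dirichlet_def by (rule G_quad(1))

lemma dir_int:
  fixes S :: "real^'n::finite^'n" and A :: "real^'n^'n"
  shows "integrable (gauss_vec S) (\<lambda>h. dirichlet A h)"
  unfolding dirichlet_def by (rule gauss_quad(1))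

lemma exp_relu_bound:
  fixes S :: "real^'n::finite^'n" and A :: "real^'n^'n"
  assumes adj: "is_adjacency A"
  shows "(\<integral>h. dirichlet A (\<chi> i. relu_ab a b (h$i)) \<partial>gauss_vec S) \<le> (a^2 + b^2) / 2 * (\<integral>h. dirichlet A h \<partial>gauss_vec S)"
proof -
  let ?F = "\<lambda>h::real^'n. dirichlet A (\<chi> i. relu_ab a b (h$i))"
  let ?F' = "\<lambda>h::real^'n. dirichlet A (\<chi> i. relu_ab a b (- h$i))"
  have i1: "integrable (gauss_vec S) ?F" by (rule dir_s_int)
  have i2: "integrable (gauss_vec S) ?F'" unfolding relu_neg by (rule dir_s_int)
  have i3: "integrable (gauss_vec S) (\<lambda>h. dirichlet A h)" by (rule dir_int)
  have sym: "(\<integral>h. ?F' h \<partial>gauss_vec S) = (\<integral>h. ?F h \<partial>gauss_vec S)"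
    using gauss_sym[OF meas_of_int[OF i1], of S] by simp
  have "2 * (\<integral>h. ?F h \<partial>gauss_vec S) = (\<integral>h. ?F h + ?F' h \<partial>gauss_vec S)"
    using sym i1 i2 by simp
  also have "\<dots> \<le> (\<integral>h. (a^2 + b^2) * dirichlet A h \<partial>gauss_vec S)"
    by (rule integral_mono) (use i1 i2 i3 dir_relu_pair[OF adj] in auto)
  also have "\<dots> = (a^2 + b^2) * (\<integral>h. dirichlet A h \<partial>gauss_vec S)" by simp
  finally show ?thesis by simp
qed

lemma G_sym: "transpose (G_map f S) = G_map f S"
  unfolding G_map_def transpose_def by (simp add: mult.commute)

lemma G_psd:
  fixes S :: "real^'n::finite^'n"
  shows "v \<bullet> (G_map (relu_ab a b) S *v v) \<ge> 0"
proof -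
  define W :: "real^'n^'n" where "W = (\<chi> i j. v$i * v$j)"
  let ?s = "\<lambda>h::real^'n. \<chi> i. relu_ab a b (h$i)"
  have "v \<bullet> (G_map (relu_ab a b) S *v v) = (\<Sum>i\<in>UNIV. \<Sum>j\<in>UNIV. W$i$j * G_map (relu_ab a b) S $i$j)"
    unfolding quad_form_sum W_def by (simp add: mult_ac)
  also have "\<dots> = (\<integral>h. ?s h \<bullet> (W *v ?s h) \<partial>gauss_vec S)" by (rule G_quad(2)[symmetric])
  finally have eq: "v \<bullet> (G_map (relu_ab a b) S *v v) = (\<integral>h. ?s h \<bullet> (W *v ?s h) \<partial>gauss_vec S)" .
  have "0 \<le> (\<integral>h. ?s h \<bullet> (W *v ?s h) \<partial>gauss_vec S)"
  proof (rule Bochner_Integration.integral_nonneg)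
    fix h :: "real^'n"
    have "?s h \<bullet> (W *v ?s h) = (\<Sum>i\<in>UNIV. relu_ab a b (h$i) * v$i) * (\<Sum>j\<in>UNIV. relu_ab a b (h$j) * v$j)"
      unfolding quad_form_sum W_def by (simp add: sum_product mult_ac)
    then show "?s h \<bullet> (W *v ?s h) \<ge> 0" by simp
  qed
  then show ?thesis unfolding eq .
qed

definition pr :: "real^'n^'n \<Rightarrow> real^'n^'n \<Rightarrow> real" where
  "pr M N = trace (transpose M ** N)"

lemma pr_sum: "pr M N = (\<Sum>i\<in>UNIV. \<Sum>j\<in>UNIV. M$i$j * N$i$j)"
proof -
  have "pr M N = (\<Sum>j\<in>UNIV. \<Sum>i\<in>UNIV. M$i$j * N$i$j)"
    unfolding pr_def trace_def matrix_matrix_mult_def transpose_def by simp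
  also have "\<dots> = (\<Sum>i\<in>UNIV. \<Sum>j\<in>UNIV. M$i$j * N$i$j)" by (rule sum.swap)
  finally show ?thesis .
qed

lemma pr_mult:
  fixes M X G Y :: "real^'n^'n"
  shows "pr M (X ** G ** Y) = pr (transpose X ** M ** transpose Y) G"
proof -
  have "pr M (X ** G ** Y) = trace ((transpose M ** X ** G) ** Y)" unfolding pr_def by (simp add: matrix_mul_assoc)
  also have "\<dots> = trace (Y ** (transpose M ** X ** G))" by (rule trace_mul_sym)
  also have "\<dots> = pr (transpose X ** M ** transpose Y) G"
    unfolding pr_def by (simp add: matrix_transpose_mul matrix_mul_assoc)
  finally show ?thesis .
qed

lemma factor_sandwich:
  fixes M G K :: "real^'n^'n"
  assumes s: "s \<ge> 0" and sym: "transpose M = M" and K: "K ** transpose K = G"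
  shows "\<exists>L::real^'n^'n. L ** transpose L = s *\<^sub>R (M ** G ** M)"
proof (intro exI)
  show "(sqrt s *\<^sub>R (M ** K)) ** transpose (sqrt s *\<^sub>R (M ** K)) = s *\<^sub>R (M ** G ** M)"
    using s K[symmetric]
    by (simp add: transpose_scalar matrix_transpose_mul sym matrix_scalar_ac scalar_matrix_assoc[symmetric] matrix_mul_assoc)
qed

lemma step_ineq:
  fixes A :: "real^'n::finite^'n" and X :: "real^'d::finite^'n" and a b sw2 :: real
  assumes adj: "is_adjacency A" and sw: "sw2 > 0" and l1: "l \<ge> 1"
  defines "f \<equiv> \<lambda>l. \<integral>h. dirichlet A h \<partial>gauss_vec (Sigma_l (relu_ab a b) sw2 A X l)"
  shows "f (Suc l) \<le> (lambda_gap A)^2 * sw2 * (a^2 + b^2) / 2 * f l"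
proof -
  let ?M = "A_hat A"
  let ?Lh = "mat 1 - A_hat A"
  let ?W = "?M ** ?Lh ** ?M"
  let ?S = "Sigma_l (relu_ab a b) sw2 A X l"
  let ?G = "G_map (relu_ab a b) ?S"
  let ?s = "\<lambda>h::real^'n. \<chi> i. relu_ab a b (h$i)"
  have Msym: "transpose ?M = ?M" by (rule A_hat_sym[OF adj])
  have S1: "Sigma_l (relu_ab a b) sw2 A X (Suc l) = sw2 *\<^sub>R (?M ** ?G ** ?M)" using l1 by simp
  obtain K :: "real^'n^'n" where K: "K ** transpose K = ?G"
    using psd_sqrt[OF G_sym G_psd] by blast
  have fac: "\<exists>L::real^'n^'n. L ** transpose L = Sigma_l (relu_ab a b) sw2 A X (Suc l)"
    unfolding S1 by (rule factor_sandwich[OF _ Msym K]) (use sw in simp)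
  have "f (Suc l) = (\<Sum>i\<in>UNIV. \<Sum>j\<in>UNIV. ?Lh$i$j * Sigma_l (relu_ab a b) sw2 A X (Suc l) $i$j)"
    unfolding f_def dirichlet_def by (rule gauss_quad(2)[OF fac])
  also have "\<dots> = sw2 * pr ?Lh (?M ** ?G ** ?M)"
    unfolding S1 pr_sum by (simp add: sum_distrib_left mult_ac)
  also have "pr ?Lh (?M ** ?G ** ?M) = pr ?W ?G"
    unfolding pr_mult Msym ..
  also have "\<dots> = (\<integral>h. ?s h \<bullet> (?W *v ?s h) \<partial>gauss_vec ?S)"
    unfolding pr_sum by (rule G_quad(2)[symmetric])
  also have "\<dots> \<le> (\<integral>h. (lambda_gap A)^2 * dirichlet A (?s h) \<partial>gauss_vec ?S)"
  proof (rule integral_mono)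
    show "integrable (gauss_vec ?S) (\<lambda>h. ?s h \<bullet> (?W *v ?s h))" by (rule G_quad(1))
    show "integrable (gauss_vec ?S) (\<lambda>h. (lambda_gap A)^2 * dirichlet A (?s h))"
      by (intro integrable_mult_right dir_s_int)
    show "?s h \<bullet> (?W *v ?s h) \<le> (lambda_gap A)^2 * dirichlet A (?s h)" for h
      by (rule Ahat_spectral_ineq[OF adj])
  qed
  also have "\<dots> = (lambda_gap A)^2 * (\<integral>h. dirichlet A (?s h) \<partial>gauss_vec ?S)" by simp
  finally have "f (Suc l) \<le> sw2 * ((lambda_gap A)^2 * (\<integral>h. dirichlet A (?s h) \<partial>gauss_vec ?S))"
    using sw by (simp add: mult_left_mono)
  also have "\<dots> \<le> sw2 * ((lambda_gap A)^2 * ((a^2 + b^2) / 2 * f l))"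
    unfolding f_def using sw exp_relu_bound[OF adj, where a=a and b=b and S="?S"]
    by (intro mult_left_mono) auto
  also have "\<dots> = (lambda_gap A)^2 * sw2 * (a^2 + b^2) / 2 * f l" by (simp add: field_simps)
  finally show ?thesis .
qed

theorem mainTheorem14:
  fixes A :: "real^'n::finite^'n" and X :: "real^'d::finite^'n"
    and \<alpha> \<beta> sw2 :: real
  assumes "is_adjacency A"
    and "\<alpha> \<ge> 0" and "\<beta> \<ge> 0" and "\<not> (\<alpha> = 0 \<and> \<beta> = 0)"
    and "sw2 > 0"
    and "(lambda_gap A)\<^sup>2 * sw2 * (\<alpha>\<^sup>2 + \<beta>\<^sup>2) < 2"
  shows "(\<lambda>l. \<integral>h. dirichlet A h \<partial>gauss_vec (Sigma_l (relu_ab \<alpha> \<beta>) sw2 A X l))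
           \<in> O(\<lambda>l. ((lambda_gap A)\<^sup>2 * sw2 * (\<alpha>\<^sup>2 + \<beta>\<^sup>2) / 2) ^ l)"
proof -
  note adj = assms(1) and sw = assms(5)
  define c where "c = (lambda_gap A)\<^sup>2 * sw2 * (\<alpha>\<^sup>2 + \<beta>\<^sup>2) / 2"
  define f where "f l = (\<integral>h. dirichlet A h \<partial>gauss_vec (Sigma_l (relu_ab \<alpha> \<beta>) sw2 A X l))" for l
  have c0: "c \<ge> 0" unfolding c_def using sw by simp
  have fnn: "f l \<ge> 0" for l
    unfolding f_def by (rule Bochner_Integration.integral_nonneg) (rule dirichlet_nonneg[OF adj])
  have step: "f (Suc l) \<le> c * f l" if "l \<ge> 1" for l
    using step_ineq[OF adj sw that, where a=\<alpha> and b=\<beta> and X=X] unfolding f_def c_def by simp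
  have bound: "f (Suc k) \<le> c ^ k * f 1" for k
  proof (induction k)
    case 0 then show ?case by simp
  next
    case (Suc k)
    have "f (Suc (Suc k)) \<le> c * f (Suc k)" by (rule step) simp
    also have "\<dots> \<le> c * (c ^ k * f 1)" by (rule mult_left_mono[OF Suc.IH c0])
    finally show ?case by simp
  qed
  have "f \<in> O(\<lambda>l. c ^ l)"
  proof (cases "c = 0")
    case True
    have "eventually (\<lambda>l. norm (f l) \<le> 1 * norm (c ^ l)) at_top"
      unfolding eventually_at_top_linorder
    proof (intro exI allI impI)
      fix l :: nat assume "l \<ge> 2"
      then obtain k where l: "l = Suc (Suc k)" by (metis add_2_eq_Suc le_Suc_ex)
      have "f l \<le> 0" using bound[of "Suc k"] True unfolding l by simp
      then have "f l = 0" using fnn[of l] by simp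
      then show "norm (f l) \<le> 1 * norm (c ^ l)" by simp
    qed
    then show ?thesis by (rule bigoI)
  next
    case False
    then have cp: "c > 0" using c0 by simp
    have "eventually (\<lambda>l. norm (f l) \<le> (f 1 / c) * norm (c ^ l)) at_top"
      unfolding eventually_at_top_linorder
    proof (intro exI allI impI)
      fix l :: nat assume "l \<ge> 1"
      then obtain k where l: "l = Suc k" using not0_implies_Suc by force
      have "norm (f l) = f l" using fnn[of l] by simp
      also have "\<dots> \<le> c ^ k * f 1" unfolding l by (rule bound)
      also have "\<dots> = (f 1 / c) * norm (c ^ l)" using cp unfolding l by (simp add: field_simps)
      finally show "norm (f l) \<le> (f 1 / c) * norm (c ^ l)" .
    qed
    then show ?thesis by (rule bigoI)
  qed
  then show ?thesis unfolding f_def c_def .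
qed

end
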